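(* Fix $\rho_r\in(0,1)$, $\rho_w\in(0,1/2)$ and $\epsilon>0$ with $\rho_r<1-h(\rho_w)-2\epsilon$. Let $C\subseteq\{0,1\}^n$ consist of $2^{Rn}$ independent uniformly random vectors, $R=1-h(\rho_w)-\epsilon$. Then with high probability over the choice of $C$, the following holds: when the transmitted codeword is chosen uniformly from $C$, for every adversary that reads an arbitrary set of $\rho_r n$ coordinates of the transmitted codeword and then adds an error vector of Hamming weight at most $\rho_w n$ whose distribution depends only on $C$ and the read symbols (with their positions), the probability that nearest-neighbor decoding of the received word does not return the transmitted codeword is $o(1)$ as $n\to\infty$.
   Context: $h$ is the binary entropy function. A decoding error is counted whenever the Hamming ball of radius $\rho_w n$ around the received word $x+e$ contains a codeword other than the transmitted $x$. *)

theory Defs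
  imports "HOL-Probability.Probability"
begin

definition bin_entropy :: "real \<Rightarrow> real" where
  "bin_entropy p = - p * log 2 p - (1 - p) * log 2 (1 - p)"

text \<open>Vectors in {0,1}^n are represented by their supports, i.e. subsets of {0..<n}.
  Addition over GF(2) is symmetric difference.\<close>
definition vadd :: "nat set \<Rightarrow> nat set \<Rightarrow> nat set" where
  "vadd x y = (x - y) \<union> (y - x)"

definition hdist :: "nat set \<Rightarrow> nat set \<Rightarrow> nat" where
  "hdist x y = card (vadd x y)"

definition code_size :: "real \<Rightarrow> nat \<Rightarrow> nat" where
  "code_size R n = nat \<lfloor>2 powr (R * real n)\<rfloor>"

text \<open>Random code: M independent uniformly random vectors of {0,1}^n,
  i.e. a uniformly random function from indices {..<M} to vectors.\<close>
definition random_code :: "nat \<Rightarrow> nat \<Rightarrow> (nat \<Rightarrow> nat set) pmf" where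
  "random_code M n = pmf_of_set (PiE {..<M} (\<lambda>_. Pow {..<n}))"

definition decoding_error ::
  "real \<Rightarrow> nat \<Rightarrow> nat \<Rightarrow> (nat \<Rightarrow> nat set) \<Rightarrow> nat \<Rightarrow> nat set \<Rightarrow> bool" where
  "decoding_error rho_w n M c i e \<longleftrightarrow>
     (\<exists>j<M. c j \<noteq> c i \<and> real (hdist (c j) (vadd (c i) e)) \<le> rho_w * real n)"

text \<open>An admissible adversary: reads the coordinates in S (|S| \<le> rho_r n), and
  given the read symbols (the set c i \<inter> S, which together with S determines
  the read values and positions) outputs a random error vector of weight \<le> rho_w n.\<close>
definition admissible_adversary ::
  "real \<Rightarrow> real \<Rightarrow> nat \<Rightarrow> nat set \<Rightarrow> (nat set \<Rightarrow> nat set pmf) \<Rightarrow> bool" where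
  "admissible_adversary rho_r rho_w n S E \<longleftrightarrow>
     S \<subseteq> {..<n} \<and> real (card S) \<le> rho_r * real n \<and>
     (\<forall>y. \<forall>e \<in> set_pmf (E y). e \<subseteq> {..<n} \<and> real (card e) \<le> rho_w * real n)"

definition error_prob ::
  "real \<Rightarrow> nat \<Rightarrow> nat \<Rightarrow> (nat \<Rightarrow> nat set) \<Rightarrow> nat set \<Rightarrow> (nat set \<Rightarrow> nat set pmf) \<Rightarrow> real" where
  "error_prob rho_w n M c S E =
     (\<Sum>i<M. measure_pmf.prob (E (c i \<inter> S)) {e. decoding_error rho_w n M c i e}) / real M"

end

theory Submission imports Defs "HOL-Real_Asymp.Real_Asymp" begin

lemma vadd_sym: "vadd x y = vadd y x" unfolding vadd_def by auto
lemma vadd_assoc: "vadd (vadd x y) z = vadd x (vadd y z)" unfolding vadd_def by auto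
lemma vadd_self: "vadd x x = {}" unfolding vadd_def by auto
lemma vadd_empty: "vadd x {} = x" unfolding vadd_def by auto
lemma vadd_sub: "x \<subseteq> A \<Longrightarrow> y \<subseteq> A \<Longrightarrow> vadd x y \<subseteq> A" unfolding vadd_def by auto

lemma bit_differ:
  fixes i j :: nat
  assumes "i < 2^n" "j < 2^n" "i \<noteq> j"
  shows "\<exists>b<n. bit i b \<noteq> bit j b"
proof (rule ccontr)
  assume "\<not> ?thesis"
  hence h: "\<forall>b<n. bit i b = bit j b" by auto
  have "bit i b = bit j b" for b
  proof (cases "b < n")
    case True thus ?thesis using h by auto
  next
    case False
    hence "(2::nat)^n \<le> 2^b" by (intro power_increasing) auto
    hence "i < 2^b" "j < 2^b" using assms(1,2) by linarith+
    hence "i div 2^b = 0" "j div 2^b = 0" by auto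
    thus ?thesis by (simp add: bit_iff_odd)
  qed
  hence "i = j" by (simp add: bit_eq_iff)
  with assms show False by simp
qed

lemma pow_weight_sum:
  fixes p q :: real
  assumes "finite A"
  shows "(\<Sum>v\<in>Pow A. p ^ card v * q ^ card (A - v)) = (p + q) ^ card A"
  using assms
proof (induction A rule: finite_induct)
  case empty thus ?case by simp
next
  case (insert a A)
  have disj: "Pow A \<inter> insert a ` Pow A = {}" using insert by auto
  have inj: "inj_on (insert a) (Pow A)" using insert by (auto simp: inj_on_def)
  have s1: "(\<Sum>v\<in>Pow A. p ^ card v * q ^ card (insert a A - v)) = q * (\<Sum>v\<in>Pow A. p ^ card v * q ^ card (A - v))"
  proof -
    have "\<And>v. v \<in> Pow A \<Longrightarrow> insert a A - v = insert a (A - v)" using insert by auto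
    hence "\<And>v. v \<in> Pow A \<Longrightarrow> card (insert a A - v) = Suc (card (A - v))" using insert by auto
    thus ?thesis by (simp add: sum_distrib_left mult_ac)
  qed
  have s2: "(\<Sum>v\<in>insert a ` Pow A. p ^ card v * q ^ card (insert a A - v)) = p * (\<Sum>v\<in>Pow A. p ^ card v * q ^ card (A - v))"
  proof -
    have "(\<Sum>v\<in>insert a ` Pow A. p ^ card v * q ^ card (insert a A - v)) = (\<Sum>v\<in>Pow A. p ^ card (insert a v) * q ^ card (insert a A - insert a v))"
      by (rule sum.reindex[OF inj, unfolded comp_def])
    also have "\<dots> = (\<Sum>v\<in>Pow A. p * (p ^ card v * q ^ card (A - v)))"
    proof (rule sum.cong)
      fix v assume v: "v \<in> Pow A"
      hence "finite v" "a \<notin> v" using insert finite_subset by auto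
      moreover have "insert a A - insert a v = A - v" using insert v by auto
      ultimately show "p ^ card (insert a v) * q ^ card (insert a A - insert a v) = p * (p ^ card v * q ^ card (A - v))" by simp
    qed simp
    finally show ?thesis by (simp add: sum_distrib_left)
  qed
  have "(\<Sum>v\<in>Pow (insert a A). p ^ card v * q ^ card (insert a A - v)) =
     (\<Sum>v\<in>Pow A. p ^ card v * q ^ card (insert a A - v)) + (\<Sum>v\<in>insert a ` Pow A. p ^ card v * q ^ card (insert a A - v))"
    unfolding Pow_insert using insert disj by (intro sum.union_disjoint) auto
  also have "\<dots> = (p + q) * (p+q)^card A" using s1 s2 insert by (simp add: algebra_simps)
  finally show ?case using insert by simp
qed

lemma entropy_exp:
  fixes p :: real assumes "0 < p" "p < 1"
  shows "2 powr (- bin_entropy p * x) = exp (x * (p * ln p + (1-p) * ln (1-p)))"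
proof -
  have "2 powr (- bin_entropy p * x) = exp (ln 2 * (- bin_entropy p * x))" by (simp add: powr_def)
  also have "ln 2 * (- bin_entropy p * x) = x * (p * ln p + (1-p) * ln (1-p))"
    unfolding bin_entropy_def log_def by (simp add: field_simps)
  finally show ?thesis .
qed

lemma vol_bound:
  fixes p :: real and n :: nat
  assumes "0 < p" "p \<le> 1/2"
  shows "real (card {v\<in>Pow {..<n}. real (card v) \<le> p * real n}) \<le> 2 powr (bin_entropy p * real n)"
proof -
  define q where "q = 1 - p"
  have q: "0 < q" "p \<le> q" "p + q = 1" using assms unfolding q_def by auto
  define V where "V = {v\<in>Pow {..<n}. real (card v) \<le> p * real n}"
  have fin: "finite V" unfolding V_def by auto
  have key: "2 powr (- bin_entropy p * real n) \<le> p ^ card v * q ^ card ({..<n} - v)" if "v \<in> V" for v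
  proof -
    have vs: "v \<subseteq> {..<n}" "real (card v) \<le> p * real n" using that unfolding V_def by auto
    hence cd: "card ({..<n} - v) = n - card v" by (simp add: card_Diff_subset finite_subset)
    have cle: "card v \<le> n" using vs card_mono[of "{..<n}" v] by auto
    have "p ^ card v * q ^ card ({..<n} - v) = exp (real (card v) * ln p + real (n - card v) * ln q)"
      using assms q cd by (simp add: exp_add exp_of_nat_mult)
    moreover have "2 powr (- bin_entropy p * real n) = exp (real n * (p * ln p + q * ln q))"
      using entropy_exp[of p "real n"] assms unfolding q_def by simp
    moreover have "real n * (p * ln p + q * ln q) \<le> real (card v) * ln p + real (n - card v) * ln q"
    proof -
      have lpq: "ln p \<le> ln q" using assms q by simp
      have "real (n - card v) = real n - real (card v)" using cle by simp
      hence "real (card v) * ln p + real (n - card v) * ln q - real n * (p * ln p + q * ln q)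
           = (p * real n - real (card v)) * (ln q - ln p)"
        using q(3) by (simp add: algebra_simps q_def)
      moreover have "(p * real n - real (card v)) * (ln q - ln p) \<ge> 0"
        using vs lpq by (intro mult_nonneg_nonneg) auto
      ultimately show ?thesis by linarith
    qed
    ultimately show ?thesis by simp
  qed
  have "real (card V) * 2 powr (- bin_entropy p * real n) = (\<Sum>v\<in>V. 2 powr (- bin_entropy p * real n))" by simp
  also have "\<dots> \<le> (\<Sum>v\<in>V. p ^ card v * q ^ card ({..<n} - v))" by (rule sum_mono) (rule key)
  also have "\<dots> \<le> (\<Sum>v\<in>Pow {..<n}. p ^ card v * q ^ card ({..<n} - v))"
    using assms q by (intro sum_mono2) (auto simp: V_def)
  also have "\<dots> = 1" using pow_weight_sum[of "{..<n}" p q] q by simp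
  finally have "real (card V) * 2 powr (- bin_entropy p * real n) \<le> 1" .
  hence "real (card V) \<le> 1 / 2 powr (- bin_entropy p * real n)" by (simp add: field_simps)
  also have "\<dots> = 2 powr (bin_entropy p * real n)" by (simp add: powr_minus_divide powr_minus field_simps)
  finally show ?thesis unfolding V_def .
qed


lemma translate_card:
  assumes "t \<subseteq> {..<n}"
  shows "card {x\<in>Pow {..<n}. Q (vadd x t)} = card {v\<in>Pow {..<n}. Q v}"
proof -
  have inv: "\<And>x. vadd (vadd x t) t = x" by (simp add: vadd_assoc vadd_self vadd_empty)
  have sub: "\<And>x. x \<subseteq> {..<n} \<Longrightarrow> vadd x t \<subseteq> {..<n}" using assms by (auto simp: vadd_def)
  have "bij_betw (\<lambda>x. vadd x t) {x\<in>Pow {..<n}. Q (vadd x t)} {v\<in>Pow {..<n}. Q v}"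
    by (rule bij_betw_byWitness[where f' = "\<lambda>x. vadd x t"]) (use inv sub in auto)
  thus ?thesis by (rule bij_betw_same_card)
qed

lemma slice_card:
  assumes "S \<subseteq> {..<n}"
  shows "real (card {x\<in>Pow {..<n}. x \<inter> S = y}) \<le> 2^n / 2^card S"
proof (cases "y \<subseteq> S")
  case False
  have e: "{x\<in>Pow {..<n}. x \<inter> S = y} = {}" using False by blast
  show ?thesis unfolding e by simp
next
  case True
  have "bij_betw (\<lambda>x. x - S) {x\<in>Pow {..<n}. x \<inter> S = y} (Pow ({..<n} - S))"
    by (rule bij_betw_byWitness[where f' = "\<lambda>z. z \<union> y"]) (use True assms in auto)
  hence "card {x\<in>Pow {..<n}. x \<inter> S = y} = card (Pow ({..<n} - S))" by (rule bij_betw_same_card)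
  also have "\<dots> = 2 ^ (n - card S)" using assms by (simp add: card_Pow card_Diff_subset finite_subset)
  finally have "real (card {x\<in>Pow {..<n}. x \<inter> S = y}) = 2 ^ (n - card S)" by simp
  also have "\<dots> = 2^n / 2^card S"
  proof -
    have "card S \<le> n" using card_mono[OF _ assms] by simp
    thus ?thesis by (simp add: power_diff)
  qed
  finally show ?thesis by simp
qed

lemma sum_PiE_split:
  fixes g :: "'b \<Rightarrow> ('a \<Rightarrow> 'b) \<Rightarrow> real"
  assumes fin: "finite I" "finite D" and AI: "A \<subseteq> I"
    and dep: "\<And>x c c'. (\<forall>j\<in>I-A. c j = c' j) \<Longrightarrow> g x c = g x c'"
  shows "(\<Sum>c\<in>PiE I (\<lambda>_. D). \<Prod>i\<in>A. g (c i) c) = (\<Sum>b\<in>PiE (I-A) (\<lambda>_. D). \<Prod>i\<in>A. \<Sum>x\<in>D. g x b)"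
proof -
  have finA: "finite A" using fin AI finite_subset by auto
  have "(\<Sum>c\<in>PiE I (\<lambda>_. D). \<Prod>i\<in>A. g (c i) c) =
        (\<Sum>(a,b)\<in>PiE A (\<lambda>_. D) \<times> PiE (I-A) (\<lambda>_. D). \<Prod>i\<in>A. g (a i) b)"
  proof (rule sum.reindex_bij_witness[where i = "\<lambda>(a,b) i. if i \<in> A then a i else b i"
                                        and j = "\<lambda>c. (restrict c A, restrict c (I-A))"])
    fix c assume c: "c \<in> PiE I (\<lambda>_. D)"
    show "(\<lambda>(a,b) i. if i \<in> A then a i else b i) (restrict c A, restrict c (I-A)) = c"
      using c AI by (auto simp: PiE_def extensional_def fun_eq_iff)
    show "(restrict c A, restrict c (I-A)) \<in> PiE A (\<lambda>_. D) \<times> PiE (I-A) (\<lambda>_. D)"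
      using c AI by auto
    have "g (c i) (restrict c (I-A)) = g (c i) c" for i
      by (rule dep) auto
    thus "(case (restrict c A, restrict c (I-A)) of (a,b) \<Rightarrow> \<Prod>i\<in>A. g (a i) b) = (\<Prod>i\<in>A. g (c i) c)"
      by (auto intro!: prod.cong)
  next
    fix ab assume ab: "ab \<in> PiE A (\<lambda>_. D) \<times> PiE (I-A) (\<lambda>_. D)"
    obtain a b where [simp]: "ab = (a,b)" by (cases ab)
    show "(restrict ((\<lambda>(a,b) i. if i \<in> A then a i else b i) ab) A, restrict ((\<lambda>(a,b) i. if i \<in> A then a i else b i) ab) (I-A)) = ab"
      using ab AI by (auto simp: PiE_def extensional_def fun_eq_iff)
    show "(\<lambda>(a,b) i. if i \<in> A then a i else b i) ab \<in> PiE I (\<lambda>_. D)"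
      using ab AI by (auto simp: PiE_def extensional_def Pi_def)
  qed
  also have "\<dots> = (\<Sum>b\<in>PiE (I-A) (\<lambda>_. D). \<Sum>a\<in>PiE A (\<lambda>_. D). \<Prod>i\<in>A. g (a i) b)"
    by (subst sum.cartesian_product[symmetric]) (subst sum.swap, simp)
  also have "\<dots> = (\<Sum>b\<in>PiE (I-A) (\<lambda>_. D). \<Prod>i\<in>A. \<Sum>x\<in>D. g x b)"
    by (intro sum.cong refl prod_sum_PiE[symmetric]) (use finA fin in auto)
  finally show ?thesis .
qed


lemma card_filter_sum:
  "finite A \<Longrightarrow> real (card {x\<in>A. P x}) = (\<Sum>x\<in>A. if P x then 1 else 0)"
  using sum.inter_filter[of A "\<lambda>_. 1::real" P] by simp

lemma moment_bound:
  fixes n M :: nat and S y e A :: "nat set" and w Vb :: real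
  defines "D \<equiv> Pow {..<n}"
  defines "Q \<equiv> (\<lambda>u x. real (hdist u (vadd x e)) \<le> w)"
  assumes S: "S \<subseteq> {..<n}" and A: "A \<subseteq> {..<M}"
    and Vb1: "\<And>u. u \<in> D \<Longrightarrow> real (card {x\<in>D. Q u x}) \<le> Vb"
    and Vb2: "\<And>x. x \<in> D \<Longrightarrow> real (card {u\<in>D. Q u x}) \<le> Vb"
    and small: "4 * real M * Vb \<le> 2^n"
  shows "(\<Sum>c\<in>PiE {..<M} (\<lambda>_. D).
            exp (real (card {i\<in>A. c i \<inter> S = y \<and> (\<exists>j\<in>{..<M}-A. Q (c j) (c i))})))
         \<le> (2^n)^M * exp (4 * real M ^ 2 * Vb / (2^n * 2^card S))"
proof -
  define N :: real where "N = 2^n"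
  define A' where "A' = {..<M} - A"
  define P where "P = (\<lambda>x c. x \<inter> S = y \<and> (\<exists>j\<in>A'. Q (c j) x))"
  define g where "g = (\<lambda>x c. if P x c then exp 1 else (1::real))"
  define \<phi> where "\<phi> = (\<lambda>u. real (card {x\<in>D. x \<inter> S = y \<and> Q u x}))"
  define \<beta> where "\<beta> = 2 * real (card A) / N"
  have finD: "finite D" unfolding D_def by simp
  have cardD: "real (card D) = N" unfolding D_def N_def by (simp add: card_Pow)
  have Npos: "N > 0" unfolding N_def by simp
  have finA: "finite A" "finite A'" using A finite_subset unfolding A'_def by auto
  have cardAA: "card A + card A' = M" unfolding A'_def using A finA
    by (metis card_Diff_subset card_lessThan le_add_diff_inverse card_mono finite_lessThan)
  have \<phi>0: "\<phi> u \<ge> 0" for u unfolding \<phi>_def by simp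
  have \<phi>Vb: "\<phi> u \<le> Vb" if "u \<in> D" for u
  proof -
    have "card {x\<in>D. x \<inter> S = y \<and> Q u x} \<le> card {x\<in>D. Q u x}" by (rule card_mono) (use finD in auto)
    thus ?thesis using Vb1[OF that] unfolding \<phi>_def by linarith
  qed
  have Vb0: "Vb \<ge> 0" using Vb1[of "{}"] unfolding D_def by (smt (verit) of_nat_0_le_iff Pow_iff empty_subsetI)
  have step1: "exp (real (card {i\<in>A. c i \<inter> S = y \<and> (\<exists>j\<in>{..<M}-A. Q (c j) (c i))})) = (\<Prod>i\<in>A. g (c i) c)" for c
  proof -
    have "(\<Prod>i\<in>A. g (c i) c) = (\<Prod>i\<in>{i\<in>A. P (c i) c}. exp 1)"
      unfolding g_def using finA by (subst prod.inter_filter[symmetric]) auto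
    also have "\<dots> = exp 1 ^ card {i\<in>A. P (c i) c}" by simp
    also have "\<dots> = exp (real (card {i\<in>A. P (c i) c}) * 1)" by (subst exp_of_nat_mult) simp
    finally show ?thesis unfolding P_def A'_def by simp
  qed
  have step2: "(\<Sum>c\<in>PiE {..<M} (\<lambda>_. D). \<Prod>i\<in>A. g (c i) c) = (\<Sum>b\<in>PiE A' (\<lambda>_. D). \<Prod>i\<in>A. \<Sum>x\<in>D. g x b)"
    unfolding A'_def
  proof (rule sum_PiE_split)
    fix x and c c' :: "nat \<Rightarrow> nat set" assume "\<forall>j\<in>{..<M} - A. c j = c' j"
    thus "g x c = g x c'" unfolding g_def P_def A'_def by auto
  qed (use finD A in auto)
  have step3: "(\<Sum>x\<in>D. g x b) \<le> N * exp (\<beta> / real (card A) * (\<Sum>j\<in>A'. \<phi> (b j)))" if "card A > 0" for b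
  proof -
    have "(\<Sum>x\<in>D. g x b) = (\<Sum>x\<in>D. 1 + (exp 1 - 1) * (if P x b then 1 else 0))"
      unfolding g_def by (intro sum.cong) auto
    also have "\<dots> = N + (exp 1 - 1) * real (card {x\<in>D. P x b})"
      using cardD by (simp add: sum.distrib sum_distrib_left card_filter_sum[OF finD])
    also have "real (card {x\<in>D. P x b}) \<le> (\<Sum>j\<in>A'. \<phi> (b j))"
    proof -
      have "{x\<in>D. P x b} = (\<Union>j\<in>A'. {x\<in>D. x \<inter> S = y \<and> Q (b j) x})" unfolding P_def by auto
      hence "card {x\<in>D. P x b} \<le> (\<Sum>j\<in>A'. card {x\<in>D. x \<inter> S = y \<and> Q (b j) x})"
        by (simp add: card_UN_le finA)
      hence "real (card {x\<in>D. P x b}) \<le> real (\<Sum>j\<in>A'. card {x\<in>D. x \<inter> S = y \<and> Q (b j) x})" by linarith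
      thus ?thesis unfolding \<phi>_def by simp
    qed
    hence "N + (exp 1 - 1) * real (card {x\<in>D. P x b}) \<le> N + 2 * (\<Sum>j\<in>A'. \<phi> (b j))"
    proof -
      assume h: "real (card {x\<in>D. P x b}) \<le> (\<Sum>j\<in>A'. \<phi> (b j))"
      have e1: "exp 1 - 1 \<le> (2::real)" using exp_le by linarith
      have "(exp 1 - 1) * real (card {x\<in>D. P x b}) \<le> 2 * real (card {x\<in>D. P x b})"
        using e1 by (intro mult_right_mono) auto
      thus ?thesis using h by linarith
    qed
    also have "N + 2 * (\<Sum>j\<in>A'. \<phi> (b j)) = N * (1 + 2 / N * (\<Sum>j\<in>A'. \<phi> (b j)))"
      using Npos by (simp add: field_simps)
    also have "\<dots> \<le> N * exp (2 / N * (\<Sum>j\<in>A'. \<phi> (b j)))"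
      using Npos by (intro mult_left_mono) auto
    also have "2 / N = \<beta> / real (card A)" unfolding \<beta>_def using that by simp
    finally show ?thesis .
  qed
  have step3': "(\<Prod>i\<in>A. \<Sum>x\<in>D. g x b) \<le> N ^ card A * (\<Prod>j\<in>A'. exp (\<beta> * \<phi> (b j)))" for b
  proof (cases "card A = 0")
    case True
    hence "A = {}" using finA by simp
    thus ?thesis unfolding \<beta>_def by simp
  next
    case False
    have g0: "0 \<le> (\<Sum>x\<in>D. g x b)" unfolding g_def by (intro sum_nonneg) auto
    have "(\<Prod>i\<in>A. \<Sum>x\<in>D. g x b) \<le> (\<Prod>i\<in>A. N * exp (\<beta> / real (card A) * (\<Sum>j\<in>A'. \<phi> (b j))))"
      by (intro prod_mono conjI g0 step3) (use False in auto)
    also have "\<dots> = N ^ card A * exp (\<beta> / real (card A) * (\<Sum>j\<in>A'. \<phi> (b j))) ^ card A"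
      by (simp add: power_mult_distrib)
    also have "exp (\<beta> / real (card A) * (\<Sum>j\<in>A'. \<phi> (b j))) ^ card A = exp (\<beta> * (\<Sum>j\<in>A'. \<phi> (b j)))"
      using False by (subst exp_of_nat_mult[symmetric]) simp
    also have "\<dots> = (\<Prod>j\<in>A'. exp (\<beta> * \<phi> (b j)))"
      by (simp add: sum_distrib_left exp_sum finA)
    finally show ?thesis .
  qed
  have sum\<phi>: "(\<Sum>u\<in>D. \<phi> u) \<le> N / 2^card S * Vb"
  proof -
    define Y where "Y = {x\<in>D. x \<inter> S = y}"
    have "(\<Sum>u\<in>D. \<phi> u) = (\<Sum>u\<in>D. \<Sum>x\<in>Y. if Q u x then 1 else 0)"
    proof (intro sum.cong refl)
      fix u
      have "{x\<in>D. x \<inter> S = y \<and> Q u x} = {x\<in>Y. Q u x}" unfolding Y_def by auto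
      moreover have "finite Y" unfolding Y_def using finD by simp
      ultimately show "\<phi> u = (\<Sum>x\<in>Y. if Q u x then 1 else 0)" unfolding \<phi>_def using card_filter_sum by metis
    qed
    also have "\<dots> = (\<Sum>x\<in>Y. \<Sum>u\<in>D. if Q u x then 1 else 0)" by (rule sum.swap)
    also have "\<dots> = (\<Sum>x\<in>Y. real (card {u\<in>D. Q u x}))"
      by (intro sum.cong refl) (simp add: card_filter_sum[OF finD])
    also have "\<dots> \<le> (\<Sum>x\<in>Y. Vb)" by (intro sum_mono Vb2) (auto simp: Y_def)
    also have "\<dots> = real (card Y) * Vb" by simp
    also have "\<dots> \<le> N / 2^card S * Vb"
      using slice_card[OF S, of y] Vb0 unfolding Y_def D_def N_def by (intro mult_right_mono) auto
    finally show ?thesis .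
  qed
  have \<beta>0: "\<beta> \<ge> 0" unfolding \<beta>_def using Npos by simp
  have \<beta>le: "\<beta> \<le> 2 * real M / N"
  proof -
    have "card A \<le> M" using cardAA by linarith
    thus ?thesis unfolding \<beta>_def using Npos by (simp add: divide_right_mono)
  qed
  have step5: "(\<Sum>u\<in>D. exp (\<beta> * \<phi> u)) \<le> N * exp (2 * \<beta> * Vb / 2^card S)"
  proof -
    have "(\<Sum>u\<in>D. exp (\<beta> * \<phi> u)) \<le> (\<Sum>u\<in>D. 1 + 2 * (\<beta> * \<phi> u))"
    proof (intro sum_mono real_exp_bound_lemma)
      fix u assume u: "u \<in> D"
      show "0 \<le> \<beta> * \<phi> u" using \<beta>0 \<phi>0 by simp
      have "\<beta> * \<phi> u \<le> 2 * real M / N * Vb" using \<beta>0 \<beta>le \<phi>0 \<phi>Vb[OF u] by (intro mult_mono) auto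
      also have "\<dots> \<le> 1/2" using small Npos unfolding N_def by (simp add: field_simps)
      finally show "\<beta> * \<phi> u \<le> 1/2" .
    qed
    also have "\<dots> = N + 2 * \<beta> * (\<Sum>u\<in>D. \<phi> u)"
      using cardD by (simp add: sum.distrib sum_distrib_left sum_distrib_right mult.assoc[symmetric])
    also have "\<dots> \<le> N + 2 * \<beta> * (N / 2^card S * Vb)" using sum\<phi> \<beta>0 by (intro add_left_mono mult_left_mono) auto
    also have "\<dots> = N * (1 + 2 * \<beta> * Vb / 2^card S)" using Npos by (simp add: field_simps)
    also have "\<dots> \<le> N * exp (2 * \<beta> * Vb / 2^card S)" using Npos by (intro mult_left_mono) auto
    finally show ?thesis .
  qed
  have "(\<Sum>c\<in>PiE {..<M} (\<lambda>_. D). exp (real (card {i\<in>A. c i \<inter> S = y \<and> (\<exists>j\<in>{..<M}-A. Q (c j) (c i))})))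
      = (\<Sum>b\<in>PiE A' (\<lambda>_. D). \<Prod>i\<in>A. \<Sum>x\<in>D. g x b)" using step1 step2 by simp
  also have "\<dots> \<le> (\<Sum>b\<in>PiE A' (\<lambda>_. D). N ^ card A * (\<Prod>j\<in>A'. exp (\<beta> * \<phi> (b j))))"
    by (intro sum_mono step3')
  also have "\<dots> = N ^ card A * (\<Prod>j\<in>A'. \<Sum>u\<in>D. exp (\<beta> * \<phi> u))"
    by (subst prod_sum_PiE) (auto simp: finA finD sum_distrib_left)
  also have "\<dots> \<le> N ^ card A * (\<Prod>j\<in>A'. N * exp (2 * \<beta> * Vb / 2^card S))"
    by (intro mult_left_mono prod_mono conjI step5 sum_nonneg) (use Npos in auto)
  also have "\<dots> = N ^ (card A + card A') * exp (real (card A') * (2 * \<beta> * Vb / 2^card S))"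
    by (simp add: power_mult_distrib power_add exp_of_nat_mult[symmetric])
  also have "\<dots> \<le> N ^ M * exp (4 * real M ^ 2 * Vb / (N * 2^card S))"
  proof -
    have "real (card A') * (2 * \<beta> * Vb / 2^card S) = 4 * (real (card A) * real (card A')) * Vb / (N * 2^card S)"
      unfolding \<beta>_def by (simp add: field_simps)
    also have "\<dots> \<le> 4 * real M ^ 2 * Vb / (N * 2^card S)"
    proof -
      have "real (card A) * real (card A') \<le> real M * real M"
        using cardAA by (intro mult_mono) auto
      thus ?thesis using Vb0 Npos by (intro divide_right_mono mult_right_mono) (auto simp: power2_eq_square)
    qed
    finally have "exp (real (card A') * (2 * \<beta> * Vb / 2^card S)) \<le> exp (4 * real M ^ 2 * Vb / (N * 2^card S))" by simp
    thus ?thesis unfolding cardAA using Npos by (intro mult_left_mono) auto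
  qed
  finally show ?thesis unfolding N_def .
qed


definition Xset :: "real \<Rightarrow> nat \<Rightarrow> nat \<Rightarrow> (nat \<Rightarrow> nat set) \<Rightarrow> nat set \<Rightarrow> nat set \<Rightarrow> nat set \<Rightarrow> nat set \<Rightarrow> nat set" where
  "Xset rho_w n M c S y e A = {i\<in>A. c i \<inter> S = y \<and> (\<exists>j\<in>{..<M}-A. real (hdist (c j) (vadd (c i) e)) \<le> rho_w * real n)}"

definition Acls :: "nat \<Rightarrow> nat \<Rightarrow> bool \<Rightarrow> nat set" where
  "Acls M b v = {i\<in>{..<M}. bit i b = v}"

lemma prob_as_sum:
  fixes p :: "'a pmf"
  assumes "finite D" "set_pmf p \<subseteq> D"
  shows "measure_pmf.prob p X = (\<Sum>e\<in>D. pmf p e * (if e \<in> X then 1 else 0))"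
proof -
  have eq: "X \<inter> D \<inter> set_pmf p = X \<inter> set_pmf p" using assms by auto
  have "measure_pmf.prob p X = measure_pmf.prob p (X \<inter> set_pmf p)" by (simp add: measure_Int_set_pmf)
  also have "\<dots> = measure_pmf.prob p (X \<inter> D \<inter> set_pmf p)" by (simp only: eq)
  also have "\<dots> = measure_pmf.prob p (X \<inter> D)" by (rule measure_Int_set_pmf)
  also have "\<dots> = sum (pmf p) (X \<inter> D)" using assms by (intro measure_measure_pmf_finite) auto
  also have "\<dots> = (\<Sum>e\<in>D. if e \<in> X then pmf p e else 0)"
    using assms by (simp add: sum.inter_filter Int_def conj_commute)
  also have "\<dots> = (\<Sum>e\<in>D. pmf p e * (if e \<in> X then 1 else 0))" by (intro sum.cong) auto
  finally show ?thesis .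
qed

lemma err_count:
  fixes c :: "nat \<Rightarrow> nat set"
  assumes M: "M \<le> 2^n"
    and good: "\<forall>b<n. \<forall>v. real (card (Xset rho_w n M c S y e (Acls M b v))) \<le> a"
  shows "real (card {i\<in>{..<M}. c i \<inter> S = y \<and> decoding_error rho_w n M c i e}) \<le> 2 * real n * a"
proof -
  have sub: "{i\<in>{..<M}. c i \<inter> S = y \<and> decoding_error rho_w n M c i e} \<subseteq>
        (\<Union>b\<in>{..<n}. \<Union>v\<in>(UNIV::bool set). Xset rho_w n M c S y e (Acls M b v))"
  proof
    fix i assume "i \<in> {i\<in>{..<M}. c i \<inter> S = y \<and> decoding_error rho_w n M c i e}"
    then obtain j where ij: "i < M" "c i \<inter> S = y" "j < M" "c j \<noteq> c i"
       "real (hdist (c j) (vadd (c i) e)) \<le> rho_w * real n"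
      unfolding decoding_error_def by auto
    hence "i \<noteq> j" by auto
    moreover have "i < 2^n" "j < 2^n" using ij M by auto
    ultimately obtain b where b: "b < n" "bit i b \<noteq> bit j b" using bit_differ by blast
    have "i \<in> Xset rho_w n M c S y e (Acls M b (bit i b))"
      unfolding Xset_def Acls_def using ij b by auto
    thus "i \<in> (\<Union>b\<in>{..<n}. \<Union>v\<in>(UNIV::bool set). Xset rho_w n M c S y e (Acls M b v))" using b by blast
  qed
  have fin: "finite (Xset rho_w n M c S y e (Acls M b v))" for b v unfolding Xset_def Acls_def by auto
  have "card {i\<in>{..<M}. c i \<inter> S = y \<and> decoding_error rho_w n M c i e}
      \<le> card (\<Union>b\<in>{..<n}. \<Union>v\<in>(UNIV::bool set). Xset rho_w n M c S y e (Acls M b v))"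
    by (rule card_mono[OF _ sub]) (auto simp: fin)
  also have "\<dots> \<le> (\<Sum>b\<in>{..<n}. card (\<Union>v\<in>(UNIV::bool set). Xset rho_w n M c S y e (Acls M b v)))"
    by (rule card_UN_le) simp
  also have "\<dots> \<le> (\<Sum>b\<in>{..<n}. \<Sum>v\<in>(UNIV::bool set). card (Xset rho_w n M c S y e (Acls M b v)))"
    by (intro sum_mono card_UN_le) simp
  finally have "real (card {i\<in>{..<M}. c i \<inter> S = y \<and> decoding_error rho_w n M c i e})
      \<le> real (\<Sum>b\<in>{..<n}. \<Sum>v\<in>(UNIV::bool set). card (Xset rho_w n M c S y e (Acls M b v)))"
    by (simp only: of_nat_le_iff)
  also have "\<dots> = (\<Sum>b\<in>{..<n}. \<Sum>v\<in>(UNIV::bool set). real (card (Xset rho_w n M c S y e (Acls M b v))))"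
    by simp
  also have "\<dots> \<le> (\<Sum>b\<in>{..<n}. \<Sum>v\<in>(UNIV::bool set). a)"
    using good by (intro sum_mono) auto
  also have "\<dots> = 2 * real n * a" by (simp add: UNIV_bool)
  finally show ?thesis .
qed

lemma error_bound_good:
  fixes c :: "nat \<Rightarrow> nat set"
  assumes M: "M \<le> 2^n" "0 < M" and a: "a \<ge> 0"
    and adm: "admissible_adversary rho_r rho_w n S E"
    and good: "\<forall>y\<in>Pow {..<n}. \<forall>e\<in>Pow {..<n}. \<forall>b<n. \<forall>v. real (card (Xset rho_w n M c S y e (Acls M b v))) \<le> a"
  shows "error_prob rho_w n M c S E \<le> 2^card S * (2 * real n * a) / real M"
proof -
  define D where "D = Pow {..<n}"
  have S: "S \<subseteq> {..<n}" and supp: "\<And>y. set_pmf (E y) \<subseteq> D"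
    using adm unfolding admissible_adversary_def D_def by auto
  have finD: "finite D" unfolding D_def by simp
  have finS: "finite S" using S finite_subset by auto
  define f where "f = (\<lambda>i. measure_pmf.prob (E (c i \<inter> S)) {e. decoding_error rho_w n M c i e})"
  have "(\<Sum>i<M. f i) = (\<Sum>y\<in>Pow S. \<Sum>i\<in>{i. i \<in> {..<M} \<and> c i \<inter> S = y}. f i)"
    by (rule sum.group[symmetric]) (use finS in auto)
  also have "\<dots> \<le> (\<Sum>y\<in>Pow S. 2 * real n * a)"
  proof (rule sum_mono)
    fix y assume y: "y \<in> Pow S"
    have "(\<Sum>i\<in>{i. i \<in> {..<M} \<and> c i \<inter> S = y}. f i)
        = (\<Sum>i\<in>{i. i \<in> {..<M} \<and> c i \<inter> S = y}. \<Sum>e\<in>D. pmf (E y) e * (if decoding_error rho_w n M c i e then 1 else 0))"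
      unfolding f_def by (intro sum.cong refl) (simp add: prob_as_sum[OF finD supp])
    also have "\<dots> = (\<Sum>e\<in>D. pmf (E y) e * (\<Sum>i\<in>{i. i \<in> {..<M} \<and> c i \<inter> S = y}. if decoding_error rho_w n M c i e then 1 else 0))"
      by (subst sum.swap) (simp add: sum_distrib_left)
    also have "\<dots> = (\<Sum>e\<in>D. pmf (E y) e * real (card {i\<in>{..<M}. c i \<inter> S = y \<and> decoding_error rho_w n M c i e}))"
    proof (intro sum.cong refl arg_cong2[where f = "(*)"])
      fix e
      have "{i\<in>{..<M}. c i \<inter> S = y \<and> decoding_error rho_w n M c i e} = {i\<in>{i. i \<in> {..<M} \<and> c i \<inter> S = y}. decoding_error rho_w n M c i e}" by auto
      thus "(\<Sum>i\<in>{i. i \<in> {..<M} \<and> c i \<inter> S = y}. if decoding_error rho_w n M c i e then 1 else 0) =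
          real (card {i\<in>{..<M}. c i \<inter> S = y \<and> decoding_error rho_w n M c i e})"
        using card_filter_sum[of "{i. i \<in> {..<M} \<and> c i \<inter> S = y}" "\<lambda>i. decoding_error rho_w n M c i e"] by auto
    qed
    also have "\<dots> \<le> (\<Sum>e\<in>D. pmf (E y) e * (2 * real n * a))"
    proof (intro sum_mono mult_left_mono)
      fix e assume "e \<in> D"
      have "y \<in> Pow {..<n}" using y S by auto
      thus "real (card {i\<in>{..<M}. c i \<inter> S = y \<and> decoding_error rho_w n M c i e}) \<le> 2 * real n * a"
        using good \<open>e \<in> D\<close> unfolding D_def by (intro err_count M(1)) auto
    qed simp
    also have "\<dots> = (\<Sum>e\<in>D. pmf (E y) e) * (2 * real n * a)" by (simp add: sum_distrib_right)
    also have "\<dots> \<le> 1 * (2 * real n * a)"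
    proof (intro mult_right_mono)
      have "(\<Sum>e\<in>D. pmf (E y) e) = measure_pmf.prob (E y) D" using finD by (simp add: measure_measure_pmf_finite)
      also have "\<dots> \<le> 1" by simp
      finally show "(\<Sum>e\<in>D. pmf (E y) e) \<le> 1" .
    qed (use a in simp)
    finally show "(\<Sum>i\<in>{i. i \<in> {..<M} \<and> c i \<inter> S = y}. f i) \<le> 2 * real n * a" by simp
  qed
  also have "\<dots> = 2^card S * (2 * real n * a)" using finS by (simp add: card_Pow)
  finally show ?thesis unfolding error_prob_def f_def[symmetric] using M by (simp add: divide_right_mono)
qed


lemma tail_bound:
  fixes n M :: nat and S y e :: "nat set" and rho_w Vb a :: real and b :: nat and v :: bool
  defines "D \<equiv> Pow {..<n}"
  assumes S: "S \<subseteq> {..<n}"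
    and Vb1: "\<And>u. u \<in> D \<Longrightarrow> real (card {x\<in>D. real (hdist u (vadd x e)) \<le> rho_w * real n}) \<le> Vb"
    and Vb2: "\<And>x. x \<in> D \<Longrightarrow> real (card {u\<in>D. real (hdist u (vadd x e)) \<le> rho_w * real n}) \<le> Vb"
    and small: "4 * real M * Vb \<le> 2^n"
  shows "real (card {c\<in>PiE {..<M} (\<lambda>_. D). real (card (Xset rho_w n M c S y e (Acls M b v))) > a})
         \<le> (2^n)^M * exp (4 * real M ^ 2 * Vb / (2^n * 2^card S) - a)"
proof -
  define \<Omega> where "\<Omega> = PiE {..<M} (\<lambda>_. D)"
  define X where "X = (\<lambda>c. real (card (Xset rho_w n M c S y e (Acls M b v))))"
  define B where "B = {c\<in>\<Omega>. X c > a}"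
  have fin: "finite \<Omega>" unfolding \<Omega>_def D_def by (intro finite_PiE) auto
  have mb: "(\<Sum>c\<in>\<Omega>. exp (X c)) \<le> (2^n)^M * exp (4 * real M ^ 2 * Vb / (2^n * 2^card S))"
    unfolding \<Omega>_def X_def Xset_def D_def
    by (rule moment_bound[OF S _ Vb1[unfolded D_def] Vb2[unfolded D_def] small]) (auto simp: Acls_def)
  have "real (card B) * exp a = (\<Sum>c\<in>B. exp a)" by simp
  also have "\<dots> \<le> (\<Sum>c\<in>B. exp (X c))" by (intro sum_mono) (auto simp: B_def less_imp_le)
  also have "\<dots> \<le> (\<Sum>c\<in>\<Omega>. exp (X c))" by (intro sum_mono2 fin) (auto simp: B_def)
  also have "\<dots> \<le> (2^n)^M * exp (4 * real M ^ 2 * Vb / (2^n * 2^card S))" by (rule mb)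
  finally have "real (card B) \<le> (2^n)^M * exp (4 * real M ^ 2 * Vb / (2^n * 2^card S)) / exp a"
    by (simp add: field_simps)
  also have "\<dots> = (2^n)^M * exp (4 * real M ^ 2 * Vb / (2^n * 2^card S) - a)"
    by (simp add: exp_diff)
  finally show ?thesis unfolding B_def X_def \<Omega>_def .
qed


lemma hdist_vadd_rewrite: "hdist u (vadd x e) = card (vadd x (vadd u e))"
  unfolding hdist_def by (rule arg_cong[where f=card]) (auto simp: vadd_def)

lemma ball_bound:
  fixes n :: nat and rho_w :: real and t :: "nat set"
  assumes "0 < rho_w" "rho_w \<le> 1/2" "t \<subseteq> {..<n}"
  shows "real (card {x\<in>Pow {..<n}. real (card (vadd x t)) \<le> rho_w * real n}) \<le> 2 powr (bin_entropy rho_w * real n)"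
  using translate_card[OF assms(3), of "\<lambda>v. real (card v) \<le> rho_w * real n"] vol_bound[OF assms(1,2), of n]
  by simp

lemma main_n:
  fixes rho_r rho_w eps R :: real and n :: nat
  assumes rw: "0 < rho_w" "rho_w < 1/2" and eps: "0 < eps" and h0: "0 \<le> bin_entropy rho_w"
    and R: "R = 1 - bin_entropy rho_w - eps" and Rr: "rho_r + eps < R" and rr: "0 < rho_r"
    and C: "8 \<le> 2 powr (eps * real n / 2)"
  defines "M \<equiv> code_size R n"
  shows "measure_pmf.prob (random_code M n)
           {c. \<forall>S E. admissible_adversary rho_r rho_w n S E \<longrightarrow>
                error_prob rho_w n M c S E \<le> 2 * real n * 2 powr (-(eps * real n / 2))}
         \<ge> 1 - 2 * real n * 8^n * exp (-(1/4) * 2 powr (eps * real n / 2))"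
proof -
  define h where "h = bin_entropy rho_w"
  define p where "p = 2 powr (eps * real n / 2)"
  define \<tau> where "\<tau> = 2 powr (-(eps * real n / 2))"
  define T where "T = exp (-(1/4) * 2 powr (eps * real n / 2))"
  define Vb where "Vb = 2 powr (h * real n)"
  define N :: real where "N = 2^n"
  define D where "D = Pow {..<n}"
  define \<Omega> where "\<Omega> = PiE {..<M} (\<lambda>_. D)"
  define x where "x = 2 powr (R * real n)"
  have p8: "p \<ge> 8" using C unfolding p_def .
  have \<tau>p: "\<tau> = 1 / p" unfolding \<tau>_def p_def by (simp add: powr_minus_divide)
  have Npos: "N > 0" unfolding N_def by simp
  have Rpos: "R > 0" using Rr eps rr by (smt (verit))
  have R1: "R \<le> 1" using R h0 eps by simp
  have x1: "x \<ge> 1" unfolding x_def using Rpos by (simp add: ge_one_powr_ge_zero)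
  have Mx: "real M \<le> x" "real M \<ge> x / 2" "M \<ge> 1"
  proof -
    have Mf: "real M = of_int \<lfloor>x\<rfloor>" unfolding M_def code_size_def x_def using x1 x_def by simp
    show "real M \<le> x" using Mf by simp
    show "real M \<ge> x / 2"
    proof (cases "x \<ge> 2")
      case True thus ?thesis using Mf by linarith
    next
      case False
      hence "\<lfloor>x\<rfloor> = 1" using x1 by (simp add: floor_eq_iff)
      thus ?thesis using Mf False by simp
    qed
    thus "M \<ge> 1" using x1 by linarith
  qed
  have M2n: "M \<le> 2^n"
  proof -
    have "R * real n \<le> 1 * real n" using R1 by (intro mult_right_mono) auto
    hence "x \<le> 2 powr real n" unfolding x_def by (intro powr_mono) auto
    hence "x \<le> 2^n" by (simp add: powr_realpow)
    hence "real M \<le> 2^n" using Mx(1) by linarith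
    hence "real M \<le> real ((2::nat)^n)" by (simp only: of_nat_power of_nat_numeral)
    thus ?thesis by (simp only: of_nat_le_iff)
  qed
  have MVb: "real M * Vb \<le> N / p^2"
  proof -
    have "real M * Vb \<le> x * Vb" using Mx unfolding Vb_def by (intro mult_right_mono) auto
    also have "x * Vb = 2 powr (R * real n + h * real n)" unfolding x_def Vb_def by (simp add: powr_add)
    also have "R * real n + h * real n = real n - eps * real n" unfolding R h_def by (simp add: algebra_simps)
    also have "2 powr (real n - eps * real n) = 2 powr real n / 2 powr (eps * real n)" by (rule powr_diff)
    also have "2 powr (eps * real n) = p^2"
    proof -
      have "p^2 = 2 powr (eps * real n / 2 + eps * real n / 2)" unfolding p_def power2_eq_square by (rule powr_add[symmetric])
      thus ?thesis by simp
    qed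
    also have "2 powr real n = N" unfolding N_def by (simp add: powr_realpow)
    finally show ?thesis .
  qed
  have p0: "p > 0" using p8 by simp
  have Vb0: "Vb \<ge> 0" unfolding Vb_def by simp
  have small: "4 * real M * Vb \<le> 2^n"
  proof -
    have "4 * real M * Vb \<le> 4 * (N / p^2)" using MVb by simp
    also have "\<dots> \<le> N"
    proof -
      have pp: "8 * 8 \<le> p * p" using p8 by (intro mult_mono) auto
      hence "4 / p^2 \<le> 1" using p0 by (simp add: power2_eq_square)
      hence "N * (4 / p^2) \<le> N * 1" using Npos by (intro mult_left_mono) auto
      moreover have "4 * (N / p^2) = N * (4 / p^2)" by simp
      ultimately show ?thesis by linarith
    qed
    finally show ?thesis unfolding N_def .
  qed
  have ratio: "4 * real M * Vb / N \<le> \<tau> / 2"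
  proof -
    have "4 * real M * Vb / N \<le> 4 * (N / p^2) / N" using MVb Npos by (intro divide_right_mono) auto
    also have "\<dots> = 4 / p^2" using Npos by simp
    also have "\<dots> \<le> 1 / (2 * p)"
    proof -
      have pp: "8 * p \<le> p * p" using p8 p0 by (intro mult_right_mono) auto
      have "4 / p^2 = (4 / p) / p" by (simp add: power2_eq_square)
      also have "4 / p \<le> 1/2" using pp p0 by (simp add: field_simps)
      hence "(4 / p) / p \<le> (1/2) / p" using p0 by (intro divide_right_mono) auto
      finally show ?thesis by simp
    qed
    also have "\<dots> = \<tau> / 2" unfolding \<tau>p by simp
    finally show ?thesis .
  qed
  have Vb1: "real (card {x\<in>D. real (hdist u (vadd x e)) \<le> rho_w * real n}) \<le> Vb" if "u \<in> D" "e \<in> D" for u e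
  proof -
    have t: "vadd u e \<subseteq> {..<n}" using that unfolding D_def by (auto simp: vadd_def)
    show ?thesis unfolding hdist_vadd_rewrite D_def Vb_def h_def
      using ball_bound[OF rw(1) _ t] rw(2) by simp
  qed
  have Vb2: "real (card {u\<in>D. real (hdist u (vadd x e)) \<le> rho_w * real n}) \<le> Vb" if "x \<in> D" "e \<in> D" for x e
  proof -
    have t: "vadd x e \<subseteq> {..<n}" using that unfolding D_def by (auto simp: vadd_def)
    show ?thesis unfolding hdist_def D_def Vb_def h_def
      using ball_bound[OF rw(1) _ t] rw(2) by simp
  qed
  define Sfam where "Sfam = {S\<in>Pow {..<n}. real (card S) \<le> rho_r * real n}"
  define a :: "nat set \<Rightarrow> real" where "a = (\<lambda>S. \<tau> * real M / 2^card S)"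
  define B where "B = (\<lambda>(S, y, e, b, v). {c\<in>\<Omega>. real (card (Xset rho_w n M c S y e (Acls M b (v::bool)))) > a S})"
  define P where "P = Sfam \<times> D \<times> D \<times> {..<n} \<times> (UNIV :: bool set)"
  define Bad where "Bad = (\<Union>q\<in>P. B q)"
  have finP: "finite P" unfolding P_def Sfam_def D_def by auto
  have cardP: "real (card P) \<le> 2 * real n * 8^n"
  proof -
    have "card Sfam \<le> card (Pow {..<n})" unfolding Sfam_def by (rule card_mono) auto
    hence cS: "real (card Sfam) \<le> 2^n" by (simp add: card_Pow)
    have "real (card P) = real (card Sfam) * 2^n * 2^n * real n * 2"
      unfolding P_def D_def by (simp add: card_cartesian_product card_Pow UNIV_bool)
    also have "\<dots> \<le> 2^n * 2^n * 2^n * real n * 2" using cS by (intro mult_right_mono) auto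
    also have "\<dots> = 2 * real n * 8^n" by (simp add: power_mult_distrib[symmetric])
    finally show ?thesis .
  qed
  have Bq: "real (card (B q)) \<le> N^M * T" if "q \<in> P" for q
  proof -
    obtain S y e b v where q: "q = (S, y, e, b, v)" by (cases q) auto
    have S: "S \<subseteq> {..<n}" "real (card S) \<le> rho_r * real n" and e: "e \<in> D"
      using that unfolding q P_def Sfam_def by auto
    have tb: "real (card (B q)) \<le> (2^n)^M * exp (4 * real M ^ 2 * Vb / (2^n * 2^card S) - a S)"
      unfolding q B_def prod.case \<Omega>_def D_def
      by (rule tail_bound[OF S(1) _ _ small]) (use Vb1 Vb2 e in \<open>auto simp: D_def\<close>)
    have s2: "(2::real)^card S \<le> 2 powr (rho_r * real n)"
      using S(2) by (simp add: powr_realpow[symmetric])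
    have s2pos: "(2::real)^card S > 0" by simp
    have "4 * real M ^ 2 * Vb / (2^n * 2^card S) - a S = (real M / 2^card S) * (4 * real M * Vb / N - \<tau>)"
      unfolding a_def N_def by (simp add: field_simps power2_eq_square)
    also have "\<dots> \<le> (real M / 2^card S) * (- (\<tau> / 2))"
      using ratio by (intro mult_left_mono) auto
    also have "\<dots> = - (real M * \<tau> / 2) / 2^card S" by simp
    also have "\<dots> \<le> - (real M * \<tau> / 2) / 2 powr (rho_r * real n)"
    proof -
      have "(real M * \<tau> / 2) / 2 powr (rho_r * real n) \<le> (real M * \<tau> / 2) / 2^card S"
        using s2 s2pos Mx(3) by (intro divide_left_mono) (auto simp: \<tau>_def)
      thus ?thesis by simp
    qed
    also have "\<dots> \<le> - (1/4) * p"
    proof -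
      have "x * \<tau> / 2 powr (rho_r * real n) = 2 powr (R * real n - eps * real n / 2 - rho_r * real n)"
        unfolding x_def \<tau>_def by (simp add: powr_diff powr_add[symmetric] powr_minus_divide)
      also have "\<dots> \<ge> p" unfolding p_def
      proof (intro powr_mono)
        have "(R - rho_r - eps) * real n \<ge> 0" using Rr by simp
        thus "eps * real n / 2 \<le> R * real n - eps * real n / 2 - rho_r * real n" by (simp add: algebra_simps)
      qed simp
      finally have xp: "p \<le> x * \<tau> / 2 powr (rho_r * real n)" .
      have "x / 2 * \<tau> \<le> real M * \<tau>" using Mx(2) by (intro mult_right_mono) (auto simp: \<tau>_def)
      hence "(x / 2 * \<tau>) / 2 / 2 powr (rho_r * real n) \<le> (real M * \<tau> / 2) / 2 powr (rho_r * real n)"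
        by (intro divide_right_mono) auto
      moreover have "(x / 2 * \<tau>) / 2 / 2 powr (rho_r * real n) = (x * \<tau> / 2 powr (rho_r * real n)) / 4"
        by simp
      moreover have "- (real M * \<tau> / 2) / 2 powr (rho_r * real n) = - ((real M * \<tau> / 2) / 2 powr (rho_r * real n))"
        by simp
      ultimately have f1: "x * \<tau> / 2 powr (rho_r * real n) / 4 \<le> real M * \<tau> / 2 / 2 powr (rho_r * real n)"
        and f2: "- (real M * \<tau> / 2) / 2 powr (rho_r * real n) = - (real M * \<tau> / 2 / 2 powr (rho_r * real n))"
        by auto
      define A where "A = x * \<tau> / 2 powr (rho_r * real n)"
      define L where "L = real M * \<tau> / 2 / 2 powr (rho_r * real n)"
      have "A / 4 \<le> L" "p \<le> A" using f1 xp unfolding A_def L_def by auto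
      hence "- L \<le> - (1/4) * p" by linarith
      thus ?thesis using f2 unfolding L_def by simp
    qed
    finally have ex: "4 * real M ^ 2 * Vb / (2^n * 2^card S) - a S \<le> - (1/4) * p" .
    have "((2::real)^n) ^ M * exp (4 * real M ^ 2 * Vb / (2^n * 2^card S) - a S) \<le> N^M * T"
      using ex unfolding N_def T_def p_def by (intro mult_left_mono) auto
    thus ?thesis using tb by simp
  qed
  have T0: "T \<ge> 0" unfolding T_def by simp
  have finO: "finite \<Omega>" unfolding \<Omega>_def D_def by (intro finite_PiE) auto
  have cardO: "real (card \<Omega>) = N^M" unfolding \<Omega>_def D_def N_def by (simp add: card_PiE card_Pow)
  have neO: "\<Omega> \<noteq> {}" using cardO Npos by auto
  have BadO: "Bad \<subseteq> \<Omega>" unfolding Bad_def B_def by auto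
  have cardBad: "real (card Bad) \<le> 2 * real n * 8^n * (N^M * T)"
  proof -
    have "card Bad \<le> (\<Sum>q\<in>P. card (B q))" unfolding Bad_def by (rule card_UN_le[OF finP])
    hence "real (card Bad) \<le> (\<Sum>q\<in>P. real (card (B q)))" by (simp only: of_nat_le_iff of_nat_sum[symmetric])
    also have "\<dots> \<le> (\<Sum>q\<in>P. N^M * T)" by (intro sum_mono Bq)
    also have "\<dots> = real (card P) * (N^M * T)" by simp
    also have "\<dots> \<le> 2 * real n * 8^n * (N^M * T)" using cardP T0 Npos by (intro mult_right_mono) auto
    finally show ?thesis .
  qed
  define G where "G = {c. \<forall>S E. admissible_adversary rho_r rho_w n S E \<longrightarrow>
                error_prob rho_w n M c S E \<le> 2 * real n * \<tau>}"
  have goodsub: "\<Omega> - Bad \<subseteq> G"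
  proof
    fix c assume c: "c \<in> \<Omega> - Bad"
    show "c \<in> G" unfolding G_def mem_Collect_eq
    proof (intro allI impI)
      fix S E assume adm: "admissible_adversary rho_r rho_w n S E"
      hence SS: "S \<in> Sfam" unfolding admissible_adversary_def Sfam_def by auto
      have good: "\<forall>y\<in>Pow {..<n}. \<forall>e\<in>Pow {..<n}. \<forall>b<n. \<forall>v. real (card (Xset rho_w n M c S y e (Acls M b v))) \<le> a S"
      proof (intro ballI allI impI)
        fix y e b v assume "y \<in> Pow {..<n}" "e \<in> Pow {..<n}" "b < n"
        hence "(S, y, e, b, v) \<in> P" unfolding P_def D_def using SS by auto
        hence "c \<notin> B (S, y, e, b, v)" using c unfolding Bad_def by auto
        thus "real (card (Xset rho_w n M c S y e (Acls M b v))) \<le> a S" using c unfolding B_def by auto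
      qed
      have a0: "a S \<ge> 0" unfolding a_def \<tau>_def by simp
      have "error_prob rho_w n M c S E \<le> 2^card S * (2 * real n * a S) / real M"
        by (rule error_bound_good[OF M2n _ a0 adm good]) (use Mx(3) in simp)
      also have "\<dots> = 2 * real n * \<tau>" unfolding a_def using Mx(3) by (simp add: field_simps)
      finally show "error_prob rho_w n M c S E \<le> 2 * real n * \<tau>" .
    qed
  qed
  have "measure_pmf.prob (random_code M n) G = real (card (\<Omega> \<inter> G)) / real (card \<Omega>)"
    unfolding random_code_def \<Omega>_def[symmetric] D_def[symmetric] using measure_pmf_of_set[OF neO finO] by simp
  also have "\<dots> \<ge> real (card (\<Omega> - Bad)) / real (card \<Omega>)"
  proof (intro divide_right_mono)
    have "\<Omega> - Bad \<subseteq> \<Omega> \<inter> G" using goodsub by auto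
    thus "real (card (\<Omega> - Bad)) \<le> real (card (\<Omega> \<inter> G))" using finO by (intro of_nat_mono card_mono) auto
  qed simp
  finally have pr: "measure_pmf.prob (random_code M n) G \<ge> real (card (\<Omega> - Bad)) / real (card \<Omega>)" .
  have "real (card (\<Omega> - Bad)) = real (card \<Omega>) - real (card Bad)"
    using BadO finO by (simp add: card_Diff_subset finite_subset of_nat_diff card_mono)
  hence eq: "real (card (\<Omega> - Bad)) / real (card \<Omega>) = 1 - real (card Bad) / N^M"
    using cardO Npos by (simp add: field_simps)
  have le: "real (card Bad) / N^M \<le> 2 * real n * 8^n * T"
    using cardBad Npos by (simp add: field_simps)
  show ?thesis using pr eq le unfolding G_def \<tau>_def T_def by linarith
qed

theorem theorem4p5:
  fixes rho_r rho_w eps :: real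
  assumes "0 < rho_r" "rho_r < 1"
    and "0 < rho_w" "rho_w < 1/2"
    and "0 < eps"
    and "rho_r < 1 - bin_entropy rho_w - 2 * eps"
  defines "R \<equiv> 1 - bin_entropy rho_w - eps"
  shows "\<exists>\<delta> :: nat \<Rightarrow> real. \<delta> \<longlonglongrightarrow> 0 \<and>
    (\<forall>n. measure_pmf.prob (random_code (code_size R n) n)
           {c. \<forall>S E. admissible_adversary rho_r rho_w n S E \<longrightarrow>
                   error_prob rho_w n (code_size R n) c S E \<le> \<delta> n}
         \<ge> 1 - \<delta> n)"
proof -
  have h0: "0 \<le> bin_entropy rho_w"
  proof -
    have l1: "log 2 rho_w < 0" using assms(3,4) by simp
    have l2: "log 2 (1 - rho_w) < 0" using assms(3,4) by simp
    have "rho_w * log 2 rho_w < 0" by (rule mult_pos_neg[OF assms(3) l1])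
    moreover have "(1 - rho_w) * log 2 (1 - rho_w) < 0" by (rule mult_pos_neg[OF _ l2]) (use assms(4) in simp)
    ultimately show ?thesis unfolding bin_entropy_def by simp
  qed
  have Rr: "rho_r + eps < R" unfolding R_def using assms(6) by linarith
  define F where "F = (\<lambda>n::nat. 2 * real n * 2 powr (-(eps * real n / 2)) + 2 * real n * 8^n * exp (-(1/4) * 2 powr (eps * real n / 2)))"
  define \<delta> where "\<delta> = (\<lambda>n::nat. if 8 \<le> 2 powr (eps * real n / 2) then F n else 1)"
  have F0: "F \<longlonglongrightarrow> 0" unfolding F_def using assms(5) by real_asymp
  have ev: "eventually (\<lambda>n::nat. 8 \<le> 2 powr (eps * real n / 2)) sequentially" using assms(5) by real_asymp
  have "\<delta> \<longlonglongrightarrow> 0"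
  proof (rule Lim_transform_eventually[OF F0])
    show "eventually (\<lambda>n. F n = \<delta> n) sequentially" using ev by eventually_elim (simp add: \<delta>_def)
  qed
  moreover have "measure_pmf.prob (random_code (code_size R n) n)
           {c. \<forall>S E. admissible_adversary rho_r rho_w n S E \<longrightarrow>
                   error_prob rho_w n (code_size R n) c S E \<le> \<delta> n}
         \<ge> 1 - \<delta> n" for n
  proof (cases "8 \<le> 2 powr (eps * real n / 2)")
    case False
    thus ?thesis unfolding \<delta>_def by simp
  next
    case True
    have main: "measure_pmf.prob (random_code (code_size R n) n)
           {c. \<forall>S E. admissible_adversary rho_r rho_w n S E \<longrightarrow>
                error_prob rho_w n (code_size R n) c S E \<le> 2 * real n * 2 powr (-(eps * real n / 2))}
         \<ge> 1 - 2 * real n * 8^n * exp (-(1/4) * 2 powr (eps * real n / 2))"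
      by (rule main_n[OF assms(3,4,5) h0 R_def[THEN meta_eq_to_obj_eq] Rr assms(1) True])
    have d: "\<delta> n = F n" using True unfolding \<delta>_def by simp
    have t1: "2 * real n * 2 powr (-(eps * real n / 2)) \<le> F n" unfolding F_def by simp
    have t2: "2 * real n * 8^n * exp (-(1/4) * 2 powr (eps * real n / 2)) \<le> F n" unfolding F_def by simp
    have "measure_pmf.prob (random_code (code_size R n) n)
           {c. \<forall>S E. admissible_adversary rho_r rho_w n S E \<longrightarrow>
                error_prob rho_w n (code_size R n) c S E \<le> 2 * real n * 2 powr (-(eps * real n / 2))}
       \<le> measure_pmf.prob (random_code (code_size R n) n)
           {c. \<forall>S E. admissible_adversary rho_r rho_w n S E \<longrightarrow>
                   error_prob rho_w n (code_size R n) c S E \<le> \<delta> n}"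
      using t1 d by (intro measure_pmf.finite_measure_mono) force+
    thus ?thesis using main t2 d by linarith
  qed
  ultimately show ?thesis by blast
qed

end
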